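(* Let $G$ be a finite group and $\mathcal{H}$ a special set of subgroups of $G$ with $d_G(\mathcal{H})>1$. Let $p$ be a prime divisor of $d_G(\mathcal{H})$ and $P$ a $p$-Sylow subgroup of $G$. Then there is a subset $\mathcal{H}_P^{*}$ of $\mathcal{H}_P^{\mathrm{set}}$ which is special (as a set of subgroups of $P$) and satisfies $\#\mathcal{H}_P^{*}\geq\#\mathcal{H}$.
   Context: For a subgroup $H$ of a finite group $G$, $N^G(H):=\bigcap_{g\in G}gHg^{-1}$ is its normal core. A set $\mathcal{H}$ of subgroups of $G$ is special if $G\notin\mathcal{H}$, $\#\mathcal{H}\geq2$, and for all $H,H'\in\mathcal{H}$ with $H\neq H'$ one has $N^G(H)H'=G$ or $N^G(H')H=G$. $d_G(\mathcal{H}):=\gcd((G:H)\mid H\in\mathcal{H})$. For a subgroup $P\leq G$, $\mathcal{H}_P$ is the multiset of subgroups of $P$ consisting of $P\cap gHg^{-1}$ for every $H\in\mathcal{H}$ and every $g$ in a fixed complete set of representatives of $P\backslash G/H$; $\mathcal{H}_P^{\mathrm{set}}$ is its underlying set. *)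

theory Defs
  imports "HOL-Algebra.Algebra" "HOL-Computational_Algebra.Primes"
begin

definition conj_sub :: "('a, 'b) monoid_scheme \<Rightarrow> 'a \<Rightarrow> 'a set \<Rightarrow> 'a set" where
  "conj_sub G g H = (g <#\<^bsub>G\<^esub> H) #>\<^bsub>G\<^esub> inv\<^bsub>G\<^esub> g"

definition normal_core :: "('a, 'b) monoid_scheme \<Rightarrow> 'a set \<Rightarrow> 'a set" where
  "normal_core G H = (\<Inter>g\<in>carrier G. conj_sub G g H)"

definition special :: "('a, 'b) monoid_scheme \<Rightarrow> 'a set set \<Rightarrow> bool" where
  "special G \<H> \<longleftrightarrow> (\<forall>H\<in>\<H>. subgroup H G) \<and> carrier G \<notin> \<H> \<and> card \<H> \<ge> 2 \<and>
     (\<forall>H\<in>\<H>. \<forall>H'\<in>\<H>. H \<noteq> H' \<longrightarrow>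
        normal_core G H <#>\<^bsub>G\<^esub> H' = carrier G \<or> normal_core G H' <#>\<^bsub>G\<^esub> H = carrier G)"

definition sub_index :: "('a, 'b) monoid_scheme \<Rightarrow> 'a set \<Rightarrow> nat" where
  "sub_index G H = card (carrier G) div card H"

definition d_G :: "('a, 'b) monoid_scheme \<Rightarrow> 'a set set \<Rightarrow> nat" where
  "d_G G \<H> = Gcd (sub_index G ` \<H>)"

definition sylow_subgroup :: "('a, 'b) monoid_scheme \<Rightarrow> nat \<Rightarrow> 'a set \<Rightarrow> bool" where
  "sylow_subgroup G p P \<longleftrightarrow> subgroup P G \<and> card P = p ^ multiplicity p (card (carrier G))"

definition double_coset :: "('a, 'b) monoid_scheme \<Rightarrow> 'a set \<Rightarrow> 'a \<Rightarrow> 'a set \<Rightarrow> 'a set" where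
  "double_coset G P g H = (P #>\<^bsub>G\<^esub> g) <#>\<^bsub>G\<^esub> H"

definition double_coset_reps :: "('a, 'b) monoid_scheme \<Rightarrow> 'a set \<Rightarrow> 'a set \<Rightarrow> 'a set \<Rightarrow> bool" where
  "double_coset_reps G P H R \<longleftrightarrow> R \<subseteq> carrier G \<and>
     (\<forall>g\<in>carrier G. \<exists>!r. r \<in> R \<and> g \<in> double_coset G P r H)"

(* underlying set of the multiset H_P, w.r.t. chosen representatives R H for each H *)
definition H_P_set :: "('a, 'b) monoid_scheme \<Rightarrow> 'a set \<Rightarrow> 'a set set \<Rightarrow> ('a set \<Rightarrow> 'a set) \<Rightarrow> 'a set set" where
  "H_P_set G P \<H> R = {P \<inter> conj_sub G g H | H g. H \<in> \<H> \<and> g \<in> R H}"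

end

theory Submission
  imports Defs
begin

context group begin

lemma inv_cancel_l [simp]: "x \<in> carrier G \<Longrightarrow> y \<in> carrier G \<Longrightarrow> inv x \<otimes> (x \<otimes> y) = y"
  by (simp add: m_assoc[symmetric])
lemma inv_cancel_r [simp]: "x \<in> carrier G \<Longrightarrow> y \<in> carrier G \<Longrightarrow> x \<otimes> (inv x \<otimes> y) = y"
  by (simp add: m_assoc[symmetric])

lemma conj_sub_mem:
  assumes g: "g \<in> carrier G" and H: "H \<subseteq> carrier G"
  shows "x \<in> conj_sub G g H \<longleftrightarrow> x \<in> carrier G \<and> inv g \<otimes> x \<otimes> g \<in> H"
proof
  assume "x \<in> conj_sub G g H"
  then obtain h where h: "h \<in> H" "x = g \<otimes> h \<otimes> inv g"
    unfolding conj_sub_def l_coset_def r_coset_def by auto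
  have hc: "h \<in> carrier G" using h H by auto
  have "inv g \<otimes> x \<otimes> g = h" using h(2) g hc by (simp add: m_assoc)
  then show "x \<in> carrier G \<and> inv g \<otimes> x \<otimes> g \<in> H" using h g hc by auto
next
  assume a: "x \<in> carrier G \<and> inv g \<otimes> x \<otimes> g \<in> H"
  have "x = g \<otimes> (inv g \<otimes> x \<otimes> g) \<otimes> inv g" using a g by (simp add: m_assoc)
  then show "x \<in> conj_sub G g H" using a
    unfolding conj_sub_def l_coset_def r_coset_def by blast
qed

lemma conj_sub_subgroup:
  assumes g: "g \<in> carrier G" and H: "subgroup H G"
  shows "subgroup (conj_sub G g H) G"
proof -
  have Hc: "H \<subseteq> carrier G" using H subgroup.subset by auto
  show ?thesis
  proof (rule subgroupI)
    show "conj_sub G g H \<subseteq> carrier G" using conj_sub_mem[OF g Hc] by auto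
    have "\<one> \<in> conj_sub G g H" using conj_sub_mem[OF g Hc] g subgroup.one_closed[OF H] by simp
    then show "conj_sub G g H \<noteq> {}" by auto
  next
    fix a assume "a \<in> conj_sub G g H"
    then have a: "a \<in> carrier G" "inv g \<otimes> a \<otimes> g \<in> H" using conj_sub_mem[OF g Hc] by auto
    have "inv (inv g \<otimes> a \<otimes> g) = inv g \<otimes> inv a \<otimes> g" using a g by (simp add: inv_mult_group m_assoc)
    then have "inv g \<otimes> inv a \<otimes> g \<in> H" using subgroup.m_inv_closed[OF H a(2)] by simp
    then show "inv a \<in> conj_sub G g H" using conj_sub_mem[OF g Hc] a by auto
  next
    fix a b assume "a \<in> conj_sub G g H" "b \<in> conj_sub G g H"
    then have a: "a \<in> carrier G" "inv g \<otimes> a \<otimes> g \<in> H" and b: "b \<in> carrier G" "inv g \<otimes> b \<otimes> g \<in> H"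
      using conj_sub_mem[OF g Hc] by auto
    have "(inv g \<otimes> a \<otimes> g) \<otimes> (inv g \<otimes> b \<otimes> g) = inv g \<otimes> (a \<otimes> b) \<otimes> g"
      using a b g by (simp add: m_assoc)
    then have "inv g \<otimes> (a \<otimes> b) \<otimes> g \<in> H" using subgroup.m_closed[OF H a(2) b(2)] by simp
    then show "a \<otimes> b \<in> conj_sub G g H" using conj_sub_mem[OF g Hc] a b by auto
  qed
qed

lemma conj_sub_card:
  assumes g: "g \<in> carrier G" and H: "H \<subseteq> carrier G"
  shows "card (conj_sub G g H) = card H"
proof -
  have "conj_sub G g H = (\<lambda>h. g \<otimes> h \<otimes> inv g) ` H"
    unfolding conj_sub_def l_coset_def r_coset_def by auto
  moreover have "inj_on (\<lambda>h. g \<otimes> h \<otimes> inv g) H"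
  proof (rule inj_onI)
    fix x y assume "x \<in> H" "y \<in> H" "g \<otimes> x \<otimes> inv g = g \<otimes> y \<otimes> inv g"
    then have xy: "x \<in> carrier G" "y \<in> carrier G" "g \<otimes> x \<otimes> inv g = g \<otimes> y \<otimes> inv g" using H by auto
    then have "g \<otimes> x = g \<otimes> y" using g by (metis inv_closed m_closed r_cancel)
    then show "x = y" using g xy by (metis l_cancel)
  qed
  ultimately show ?thesis by (simp add: card_image)
qed

lemma core_mem:
  assumes H: "H \<subseteq> carrier G"
  shows "x \<in> normal_core G H \<longleftrightarrow> x \<in> carrier G \<and> (\<forall>g\<in>carrier G. inv g \<otimes> x \<otimes> g \<in> H)"
  unfolding normal_core_def using conj_sub_mem[OF _ H] by auto

lemma core_sub: "H \<subseteq> carrier G \<Longrightarrow> normal_core G H \<subseteq> H"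
  using core_mem[of H] by (metis l_one one_closed inv_one r_one subsetI)

lemma core_normal:
  assumes H: "subgroup H G"
  shows "normal_core G H \<lhd> G"
proof -
  have Hc: "H \<subseteq> carrier G" using H subgroup.subset by auto
  have sg: "subgroup (normal_core G H) G"
    unfolding normal_core_def
    by (rule subgroups_Inter) (auto intro: conj_sub_subgroup[OF _ H])
  show ?thesis
  proof (simp add: normal_inv_iff sg, intro ballI)
    fix x h assume x: "x \<in> carrier G" and h: "h \<in> normal_core G H"
    have hh: "h \<in> carrier G" "\<forall>g\<in>carrier G. inv g \<otimes> h \<otimes> g \<in> H" using h core_mem[OF Hc] by auto
    have "\<forall>g\<in>carrier G. inv g \<otimes> (x \<otimes> h \<otimes> inv x) \<otimes> g \<in> H"
    proof
      fix g assume g: "g \<in> carrier G"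
      have "inv g \<otimes> (x \<otimes> h \<otimes> inv x) \<otimes> g = inv (inv x \<otimes> g) \<otimes> h \<otimes> (inv x \<otimes> g)"
        using x g hh by (simp add: inv_mult_group m_assoc)
      then show "inv g \<otimes> (x \<otimes> h \<otimes> inv x) \<otimes> g \<in> H" using hh x g by simp
    qed
    then show "x \<otimes> h \<otimes> inv x \<in> normal_core G H" using core_mem[OF Hc] x hh by auto
  qed
qed

lemma prodcard:
  assumes fin: "finite (carrier G)" and A: "subgroup A G" and B: "subgroup B G"
  shows "card (B <#> A) * card (B \<inter> A) = card B * card A"
proof -
  have Ac: "A \<subseteq> carrier G" and Bc: "B \<subseteq> carrier G" using A B subgroup.subset by auto
  define C where "C = (\<lambda>a. B #> a) ` A"
  have CR: "C \<subseteq> rcosets B" unfolding C_def RCOSETS_def using Ac by auto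
  have h1: "B <#> A = \<Union>C" unfolding C_def set_mult_def r_coset_def by auto
  have finC: "finite C" unfolding C_def using Ac fin finite_subset by blast
  have finU: "finite (\<Union>C)" using h1 setmult_subset_G[OF Bc Ac] fin finite_subset by metis
  have h2: "\<forall>c\<in>C. card c = card B" using CR card_rcosets_equal[OF _ Bc] by auto
  have disj: "\<forall>c1\<in>C. \<forall>c2\<in>C. c1 \<noteq> c2 \<longrightarrow> c1 \<inter> c2 = {}"
    using rcos_disjoint[OF B] CR unfolding pairwise_def disjnt_def by blast
  have e1: "card B * card C = card (B <#> A)"
    using card_partition[OF finC finU, of "card B"] h2 disj h1 by auto
  define D where "D = (\<lambda>c. c \<inter> A) ` C"
  have BA: "subgroup (B \<inter> A) G" using subgroups_Inter_pair[OF B A] .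
  have BAc: "B \<inter> A \<subseteq> carrier G" using Bc by auto
  have coset_eq: "(B #> a) \<inter> A = (B \<inter> A) #> a" if a: "a \<in> A" for a
  proof
    show "(B #> a) \<inter> A \<subseteq> (B \<inter> A) #> a"
    proof
      fix x assume "x \<in> (B #> a) \<inter> A"
      then obtain b where b: "b \<in> B" "x = b \<otimes> a" "x \<in> A" unfolding r_coset_def by auto
      have bc: "b \<in> carrier G" "a \<in> carrier G" using b a Ac Bc by auto
      have "b = x \<otimes> inv a" using b(2) bc by (simp add: m_assoc)
      moreover have "x \<otimes> inv a \<in> A" using b a A by (simp add: subgroup.m_closed subgroup.m_inv_closed)
      ultimately have "b \<in> A" by simp
      then show "x \<in> (B \<inter> A) #> a" using b unfolding r_coset_def by auto
    qed
    show "(B \<inter> A) #> a \<subseteq> (B #> a) \<inter> A"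
      unfolding r_coset_def using a A by (auto intro: subgroup.m_closed)
  qed
  have finD: "finite D" using finC D_def by simp
  have UD: "\<Union>D = A"
  proof
    show "\<Union>D \<subseteq> A" unfolding D_def by auto
    show "A \<subseteq> \<Union>D"
    proof
      fix a assume a: "a \<in> A"
      have "a \<in> B #> a" unfolding r_coset_def using a Ac subgroup.one_closed[OF B]
        by (metis UN_iff insertI1 l_one subsetD)
      then show "a \<in> \<Union>D" unfolding D_def C_def using a by auto
    qed
  qed
  have finUD: "finite (\<Union>D)" using UD Ac fin finite_subset by metis
  have h3: "\<forall>d\<in>D. card d = card (B \<inter> A)"
  proof
    fix d assume "d \<in> D"
    then obtain a where a: "a \<in> A" "d = (B #> a) \<inter> A" unfolding D_def C_def by auto
    have "(B \<inter> A) #> a \<in> rcosets (B \<inter> A)" unfolding RCOSETS_def using a Ac by auto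
    then show "card d = card (B \<inter> A)" using a coset_eq card_rcosets_equal[OF _ BAc] by auto
  qed
  have disjD: "\<forall>c1\<in>D. \<forall>c2\<in>D. c1 \<noteq> c2 \<longrightarrow> c1 \<inter> c2 = {}"
    unfolding D_def using disj by blast
  have e2: "card (B \<inter> A) * card D = card A"
    using card_partition[OF finD finUD, of "card (B \<inter> A)"] h3 disjD UD by auto
  have inj: "inj_on (\<lambda>c. c \<inter> A) C"
  proof (rule inj_onI)
    fix c c' assume c: "c \<in> C" and c': "c' \<in> C" and eq: "c \<inter> A = c' \<inter> A"
    obtain a where a: "a \<in> A" "c = B #> a" using c C_def by auto
    have "a \<in> B #> a" unfolding r_coset_def using a Ac subgroup.one_closed[OF B]
      by (metis UN_iff insertI1 l_one subsetD)
    then have "a \<in> c \<inter> c'" using eq a by auto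
    then show "c = c'" using disj c c' by blast
  qed
  have "card D = card C" unfolding D_def using card_image[OF inj] .
  then show ?thesis using e1 e2 by (metis mult.assoc mult.commute)
qed

lemma conj_sub_image: "conj_sub G g H = (\<lambda>h. g \<otimes> h \<otimes> inv g) ` H"
  unfolding conj_sub_def l_coset_def r_coset_def by auto

lemma sub_dvd:
  assumes S: "subgroup S G" and T: "subgroup T G" and ST: "S \<subseteq> T"
  shows "card S dvd card T"
proof -
  have "group (G\<lparr>carrier := T\<rparr>)" using subgroup_imp_group[OF T] .
  moreover have "subgroup S (G\<lparr>carrier := T\<rparr>)" using subgroup_incl[OF S T ST] .
  ultimately have "card (rcosets\<^bsub>G\<lparr>carrier := T\<rparr>\<^esub> S) * card S = order (G\<lparr>carrier := T\<rparr>)"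
    using group.lagrange by blast
  then show ?thesis unfolding order_def by (metis dvd_triv_right partial_object.select_convs(1) partial_object.surjective partial_object.update_convs(1))
qed

lemma pgroup_card:
  assumes p: "Factorial_Ring.prime (p::nat)" and S: "subgroup S G" and P: "subgroup P G" and SP: "S \<subseteq> P"
    and cP: "card P = p ^ a"
  shows "\<exists>k\<le>a. card S = p ^ k"
  using sub_dvd[OF S P SP] cP divides_primepow_nat[OF p] by simp

lemma dc_eq:
  assumes r: "r \<in> carrier G" and Pc: "P \<subseteq> carrier G" and Hc: "H \<subseteq> carrier G"
  shows "double_coset G P r H = (P <#> conj_sub G r H) #> r"
proof
  show "double_coset G P r H \<subseteq> (P <#> conj_sub G r H) #> r"
  proof
    fix x assume "x \<in> double_coset G P r H"
    then obtain q h where qh: "q \<in> P" "h \<in> H" "x = q \<otimes> r \<otimes> h"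
      unfolding double_coset_def set_mult_def r_coset_def by auto
    have c: "q \<in> carrier G" "h \<in> carrier G" using qh Pc Hc by auto
    have "x = (q \<otimes> (r \<otimes> h \<otimes> inv r)) \<otimes> r" using qh(3) c r by (simp add: m_assoc)
    then show "x \<in> (P <#> conj_sub G r H) #> r" using qh unfolding conj_sub_image set_mult_def r_coset_def by blast
  qed
  show "(P <#> conj_sub G r H) #> r \<subseteq> double_coset G P r H"
  proof
    fix x assume "x \<in> (P <#> conj_sub G r H) #> r"
    then obtain q h where qh: "q \<in> P" "h \<in> H" "x = (q \<otimes> (r \<otimes> h \<otimes> inv r)) \<otimes> r"
      unfolding conj_sub_image set_mult_def r_coset_def by auto
    have c: "q \<in> carrier G" "h \<in> carrier G" using qh Pc Hc by auto
    have "x = q \<otimes> r \<otimes> h" using qh(3) c r by (simp add: m_assoc)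
    then show "x \<in> double_coset G P r H" using qh unfolding double_coset_def set_mult_def r_coset_def by blast
  qed
qed

lemma card_rcoset_gen:
  assumes r: "r \<in> carrier G" and Y: "Y \<subseteq> carrier G"
  shows "card (Y #> r) = card Y"
proof -
  have "Y #> r = (\<lambda>y. y \<otimes> r) ` Y" unfolding r_coset_def by auto
  then show ?thesis using card_image[OF inj_on_g[OF Y r]] by simp
qed

lemma exists_good_rep:
  assumes fin: "finite (carrier G)" and p: "Factorial_Ring.prime (p::nat)" and P: "subgroup P G"
    and cP: "card P = p ^ a" and a: "a = multiplicity p (card (carrier G))"
    and H: "subgroup H G" and R: "double_coset_reps G P H R"
  shows "\<exists>r\<in>R. multiplicity p (card H) \<le> multiplicity p (card (P \<inter> conj_sub G r H))"
proof (rule ccontr)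
  assume "\<not> ?thesis"
  then have small: "\<forall>r\<in>R. multiplicity p (card (P \<inter> conj_sub G r H)) < multiplicity p (card H)" by auto
  have Pc: "P \<subseteq> carrier G" and Hc: "H \<subseteq> carrier G" using P H subgroup.subset by auto
  have Rc: "R \<subseteq> carrier G" using R unfolding double_coset_reps_def by auto
  have finR: "finite R" using Rc fin finite_subset by blast
  have p1: "p > 1" using p prime_gt_1_nat by blast
  have divs: "p ^ (a + 1) dvd card (double_coset G P r H)" if r: "r \<in> R" for r
  proof -
    have rc: "r \<in> carrier G" using r Rc by auto
    define M where "M = conj_sub G r H"
    have M: "subgroup M G" unfolding M_def using conj_sub_subgroup[OF rc H] .
    have cM: "card M = card H" unfolding M_def using conj_sub_card[OF rc Hc] .
    have PM: "subgroup (P \<inter> M) G" using subgroups_Inter_pair[OF P M] .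
    obtain k where k: "card (P \<inter> M) = p ^ k" using pgroup_card[OF p PM P _ cP] by auto
    have kh: "k < multiplicity p (card H)" using small r k multiplicity_prime_power[OF prime_imp_prime_elem[OF p], of k] unfolding M_def by auto
    define h where "h = multiplicity p (card H)"
    obtain u where u: "card H = p ^ h * u" unfolding h_def using multiplicity_dvd by blast
    have dcc: "card (double_coset G P r H) = card (P <#> M)"
    proof -
      have "M \<subseteq> carrier G" using M subgroup.subset by blast
      then have "P <#> M \<subseteq> carrier G" using setmult_subset_G[OF Pc] by blast
      then show ?thesis unfolding M_def using dc_eq[OF rc Pc Hc] card_rcoset_gen[OF rc] M_def by simp
    qed
    have eq: "card (P <#> M) * p ^ k = p ^ a * card H" using prodcard[OF fin M P] k cM cP by simp
    have "p ^ a * card H = (p ^ (a + 1) * p ^ (h - k - 1) * u) * p ^ k"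
    proof -
      have e: "p ^ a * card H = p ^ (a + h) * u" using u by (simp add: power_add)
      have "a + h = (a + 1) + (h - k - 1) + k" using kh h_def by simp
      then have "p ^ (a + h) = p ^ (a + 1) * p ^ (h - k - 1) * p ^ k" by (metis power_add)
      then have "p ^ a * card H = p ^ (a + 1) * p ^ (h - k - 1) * p ^ k * u" using e by simp
      also have "\<dots> = (p ^ (a + 1) * p ^ (h - k - 1) * u) * p ^ k"
        by (simp only: mult.assoc mult.commute[of "p ^ k" u])
      finally show ?thesis .
    qed
    then have "card (P <#> M) = p ^ (a + 1) * p ^ (h - k - 1) * u" using eq p1 by simp
    then show ?thesis using dcc by simp
  qed
  have cover: "carrier G = (\<Union>r\<in>R. double_coset G P r H)"
  proof
    show "carrier G \<subseteq> (\<Union>r\<in>R. double_coset G P r H)" using R unfolding double_coset_reps_def by blast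
    show "(\<Union>r\<in>R. double_coset G P r H) \<subseteq> carrier G"
    proof (rule UN_least)
      fix r assume "r \<in> R"
      then have "P #> r \<subseteq> carrier G" using Rc Pc r_coset_subset_G by blast
      then show "double_coset G P r H \<subseteq> carrier G" unfolding double_coset_def using setmult_subset_G Hc by blast
    qed
  qed
  have finD: "\<forall>r\<in>R. finite (double_coset G P r H)" proof
    fix r assume "r \<in> R"
    then have "double_coset G P r H \<subseteq> carrier G" using cover by blast
    then show "finite (double_coset G P r H)" using fin finite_subset by blast
  qed
  have disj: "\<forall>r\<in>R. \<forall>r'\<in>R. r \<noteq> r' \<longrightarrow> double_coset G P r H \<inter> double_coset G P r' H = {}"
  proof (intro ballI impI)
    fix r r' assume r: "r \<in> R" and r': "r' \<in> R" and ne: "r \<noteq> r'"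
    show "double_coset G P r H \<inter> double_coset G P r' H = {}"
    proof (rule ccontr)
      assume "double_coset G P r H \<inter> double_coset G P r' H \<noteq> {}"
      then obtain x where x: "x \<in> double_coset G P r H" "x \<in> double_coset G P r' H" by auto
      then have "x \<in> carrier G" using cover r by auto
      then show False using R x r r' ne unfolding double_coset_reps_def by blast
    qed
  qed
  have "card (carrier G) = (\<Sum>r\<in>R. card (double_coset G P r H))"
    using cover card_UN_disjoint[OF finR] finD disj by simp
  then have "p ^ (a + 1) dvd card (carrier G)" using divs by (simp add: dvd_sum)
  moreover have "carrier G \<noteq> {}" using one_closed by blast
  then have "card (carrier G) \<noteq> 0" using fin by simp
  moreover have "\<not> is_unit p" using p not_prime_unit by blast
  ultimately have "a + 1 \<le> a" unfolding a using multiplicity_geI by blast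
  then show False by simp
qed

lemma sub_card_nz: "finite (carrier G) \<Longrightarrow> subgroup S G \<Longrightarrow> card S \<noteq> 0"
proof -
  assume fin: "finite (carrier G)" and S: "subgroup S G"
  have "\<one> \<in> S" using S subgroup.one_closed by blast
  moreover have "finite S" using S subgroup.subset fin finite_subset by blast
  ultimately show "card S \<noteq> 0" by auto
qed

lemma conj_sub_restr:
  assumes P: "subgroup P G" and x: "x \<in> P"
  shows "conj_sub (G\<lparr>carrier := P\<rparr>) x K = conj_sub G x K"
  unfolding conj_sub_def l_coset_def r_coset_def using m_inv_consistent[OF P x] by simp

lemma set_mult_restr: "set_mult (G\<lparr>carrier := P\<rparr>) A1 A2 = A1 <#> A2"
  unfolding set_mult_def by simp

lemma key:
  assumes fin: "finite (carrier G)" and p: "Factorial_Ring.prime (p::nat)" and P: "subgroup P G"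
    and cP: "card P = p ^ a" and a: "a = multiplicity p (card (carrier G))"
    and H: "subgroup H G" and H': "subgroup H' G" and g: "g \<in> carrier G" and g': "g' \<in> carrier G"
    and NH: "normal_core G H <#> H' = carrier G"
    and good: "multiplicity p (card H') \<le> multiplicity p (card (P \<inter> conj_sub G g' H'))"
  shows "set_mult (G\<lparr>carrier := P\<rparr>) (normal_core (G\<lparr>carrier := P\<rparr>) (P \<inter> conj_sub G g H)) (P \<inter> conj_sub G g' H') = P"
proof -
  define K where "K = P \<inter> conj_sub G g H"
  define M where "M = conj_sub G g' H'"
  define K' where "K' = P \<inter> M"
  define N where "N = normal_core G H"
  define Q where "Q = N \<inter> P"
  have Pc: "P \<subseteq> carrier G" and Hc: "H \<subseteq> carrier G" and H'c: "H' \<subseteq> carrier G"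
    using P H H' subgroup.subset by auto
  have finP: "finite P" using Pc fin finite_subset by blast
  have pe: "prime_elem p" using p prime_imp_prime_elem by blast
  have nu: "\<not> is_unit p" using p not_prime_unit by blast
  have Nn: "N \<lhd> G" unfolding N_def using core_normal[OF H] .
  have N: "subgroup N G" using Nn normal_imp_subgroup by blast
  have Nc: "N \<subseteq> carrier G" using N subgroup.subset by blast
  have M: "subgroup M G" unfolding M_def using conj_sub_subgroup[OF g' H'] .
  have Mc: "M \<subseteq> carrier G" using M subgroup.subset by blast
  have cM: "card M = card H'" unfolding M_def using conj_sub_card[OF g' H'c] .
  have K: "subgroup K G" unfolding K_def using subgroups_Inter_pair[OF P conj_sub_subgroup[OF g H]] .
  have K': "subgroup K' G" unfolding K'_def using subgroups_Inter_pair[OF P M] .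
  have Q: "subgroup Q G" unfolding Q_def using subgroups_Inter_pair[OF N P] .
  have KP: "K \<subseteq> P" "K' \<subseteq> P" "Q \<subseteq> P" unfolding K_def K'_def Q_def by auto
  have Kc: "K \<subseteq> carrier G" using KP Pc by auto
  have core_eq: "normal_core (G\<lparr>carrier := P\<rparr>) K = (\<Inter>x\<in>P. conj_sub G x K)"
    unfolding normal_core_def using conj_sub_restr[OF P] by simp
  have core_sub_K: "normal_core (G\<lparr>carrier := P\<rparr>) K \<subseteq> K"
  proof -
    have "\<one> \<in> P" using P subgroup.one_closed by blast
    then have "normal_core (G\<lparr>carrier := P\<rparr>) K \<subseteq> conj_sub G \<one> K" unfolding core_eq by blast
    also have "\<dots> \<subseteq> K" using conj_sub_mem[OF one_closed Kc] by auto
    finally show ?thesis .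
  qed
  have Q_sub: "Q \<subseteq> normal_core (G\<lparr>carrier := P\<rparr>) K"
    unfolding core_eq
  proof (intro subsetI INT_I)
    fix q x assume q: "q \<in> Q" and x: "x \<in> P"
    have qc: "q \<in> carrier G" "q \<in> P" "q \<in> N" using q Q_def Pc by auto
    have xc: "x \<in> carrier G" using x Pc by auto
    have i1: "inv x \<otimes> q \<otimes> x \<in> P" using x qc P
      by (simp add: subgroup.m_closed subgroup.m_inv_closed)
    have "inv (x \<otimes> g) \<otimes> q \<otimes> (x \<otimes> g) \<in> H" using qc(3) core_mem[OF Hc] xc g unfolding N_def by auto
    moreover have "inv (x \<otimes> g) \<otimes> q \<otimes> (x \<otimes> g) = inv g \<otimes> (inv x \<otimes> q \<otimes> x) \<otimes> g"
      using xc g qc by (simp add: inv_mult_group m_assoc)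
    ultimately have "inv x \<otimes> q \<otimes> x \<in> conj_sub G g H" using conj_sub_mem[OF g Hc] xc qc by auto
    then have "inv x \<otimes> q \<otimes> x \<in> K" using i1 K_def by auto
    then show "q \<in> conj_sub G x K" using conj_sub_mem[OF xc Kc] qc by auto
  qed
  have up: "normal_core (G\<lparr>carrier := P\<rparr>) K <#> K' \<subseteq> P"
  proof
    fix x assume "x \<in> normal_core (G\<lparr>carrier := P\<rparr>) K <#> K'"
    then obtain y z where yz: "y \<in> normal_core (G\<lparr>carrier := P\<rparr>) K" "z \<in> K'" "x = y \<otimes> z"
      unfolding set_mult_def by blast
    then have "y \<in> P" "z \<in> P" using core_sub_K KP by (blast, blast)
    then show "x \<in> P" using yz(3) subgroup.m_closed[OF P] by simp
  qed
  have low: "Q <#> K' \<subseteq> normal_core (G\<lparr>carrier := P\<rparr>) K <#> K'"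
  proof
    fix x assume "x \<in> Q <#> K'"
    then obtain y z where yz: "y \<in> Q" "z \<in> K'" "x = y \<otimes> z"
      unfolding set_mult_def by blast
    then have "y \<in> normal_core (G\<lparr>carrier := P\<rparr>) K" using Q_sub by blast
    then show "x \<in> normal_core (G\<lparr>carrier := P\<rparr>) K <#> K'" using yz unfolding set_mult_def by blast
  qed
  have NM: "N <#> M = carrier G"
  proof
    show "N <#> M \<subseteq> carrier G" using setmult_subset_G[OF Nc Mc] .
    show "carrier G \<subseteq> N <#> M"
    proof
      fix x assume x: "x \<in> carrier G"
      have "inv g' \<otimes> x \<otimes> g' \<in> carrier G" using x g' by simp
      then have "inv g' \<otimes> x \<otimes> g' \<in> (\<Union>h\<in>N. \<Union>k\<in>H'. {h \<otimes> k})" using NH unfolding N_def[symmetric] set_mult_def by simp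
      then obtain n h where nh: "n \<in> N" "h \<in> H'" "inv g' \<otimes> x \<otimes> g' = n \<otimes> h"
        by blast
      have nc: "n \<in> carrier G" "h \<in> carrier G" using nh Nc H'c by auto
      have "x = g' \<otimes> (inv g' \<otimes> x \<otimes> g') \<otimes> inv g'" using x g' by (simp add: m_assoc)
      also have "\<dots> = (g' \<otimes> n \<otimes> inv g') \<otimes> (g' \<otimes> h \<otimes> inv g')" using nh(3) nc g' by (simp add: m_assoc)
      finally have xe: "x = (g' \<otimes> n \<otimes> inv g') \<otimes> (g' \<otimes> h \<otimes> inv g')" .
      have "g' \<otimes> n \<otimes> inv g' \<in> N" using normal.inv_op_closed2[OF Nn g' nh(1)] .
      moreover have "g' \<otimes> h \<otimes> inv g' \<in> M" unfolding M_def conj_sub_image using nh(2) by blast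
      ultimately show "x \<in> N <#> M" using xe unfolding set_mult_def by blast
    qed
  qed
  have cG: "card (carrier G) \<noteq> 0" using sub_card_nz[OF fin subgroup_self] .
  have cN: "card N \<noteq> 0" using sub_card_nz[OF fin N] .
  have cNM: "card (N \<inter> M) \<noteq> 0" using sub_card_nz[OF fin subgroups_Inter_pair[OF N M]] .
  have cH': "card H' \<noteq> 0" using sub_card_nz[OF fin H'] .
  have eqA: "card (carrier G) * card (N \<inter> M) = card N * card H'"
    using prodcard[OF fin M N] NM cM by simp
  have vA: "a + multiplicity p (card (N \<inter> M)) = multiplicity p (card N) + multiplicity p (card H')"
  proof -
    have "multiplicity p (card (carrier G) * card (N \<inter> M)) = multiplicity p (card N * card H')"
      using eqA by simp
    then show ?thesis unfolding prime_elem_multiplicity_mult_distrib[OF pe cG cNM]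
      prime_elem_multiplicity_mult_distrib[OF pe cN cH'] a .
  qed
  interpret si: second_isomorphism_grp N G P
    by (rule second_isomorphism_grp.intro[OF Nn]) (simp add: second_isomorphism_grp_axioms_def P)
  have NP: "subgroup (N <#> P) G" using si.normal_set_mult_subgroup .
  have cNP: "card (N <#> P) \<noteq> 0" using sub_card_nz[OF fin NP] .
  have NPd: "card (N <#> P) dvd card (carrier G)" using sub_dvd[OF NP subgroup_self setmult_subset_G[OF Nc Pc]] .
  obtain s where s: "card Q = p ^ s" using pgroup_card[OF p Q P KP(3) cP] by auto
  obtain t where t: "card K' = p ^ t" using pgroup_card[OF p K' P KP(2) cP] by auto
  have QK': "subgroup (Q \<inter> K') G" using subgroups_Inter_pair[OF Q K'] .
  obtain r where r: "card (Q \<inter> K') = p ^ r" using pgroup_card[OF p QK' P _ cP] KP by auto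
  have eqB: "card (N <#> P) * p ^ s = card N * p ^ a" using prodcard[OF fin P N] s cP Q_def by simp
  have "multiplicity p (card (N <#> P)) \<le> a" using dvd_imp_multiplicity_le[OF NPd cG] a by simp
  moreover have "multiplicity p (card (N <#> P)) + s = multiplicity p (card N) + a"
  proof -
    have "p ^ s \<noteq> 0" "p ^ a \<noteq> 0" using pe by auto
    have "multiplicity p (card (N <#> P) * p ^ s) = multiplicity p (card N * p ^ a)"
      using eqB by simp
    then show ?thesis unfolding prime_elem_multiplicity_mult_distrib[OF pe cNP \<open>p ^ s \<noteq> 0\<close>]
      prime_elem_multiplicity_mult_distrib[OF pe cN \<open>p ^ a \<noteq> 0\<close>] multiplicity_prime_power[OF pe] .
  qed
  ultimately have vB: "multiplicity p (card N) \<le> s" by simp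
  have "Q \<inter> K' \<subseteq> N \<inter> M" unfolding Q_def K'_def by auto
  then have "p ^ r dvd card (N \<inter> M)" using sub_dvd[OF QK' subgroups_Inter_pair[OF N M]] r by simp
  then have vC: "r \<le> multiplicity p (card (N \<inter> M))" using multiplicity_geI[OF cNM nu] by blast
  have vD: "multiplicity p (card H') \<le> t" using good t multiplicity_prime_power[OF pe, of t] unfolding K'_def M_def by simp
  have eqE: "card (Q <#> K') * p ^ r = p ^ s * p ^ t" using prodcard[OF fin K' Q] s t r by simp
  have QKf: "finite (Q <#> K')" using finite_subset[OF order_trans[OF low up] finP] .
  have "\<one> \<otimes> \<one> \<in> Q <#> K'" using Q K' subgroup.one_closed unfolding set_mult_def by blast
  then have cQK: "card (Q <#> K') \<noteq> 0" using QKf by auto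
  have "multiplicity p (card (Q <#> K')) + r = s + t"
  proof -
    have "p ^ r \<noteq> 0" using pe by auto
    have "multiplicity p (card (Q <#> K') * p ^ r) = multiplicity p (p ^ (s + t))"
      using eqE by (simp add: power_add)
    then show ?thesis unfolding prime_elem_multiplicity_mult_distrib[OF pe cQK \<open>p ^ r \<noteq> 0\<close>]
      multiplicity_prime_power[OF pe] .
  qed
  then have "a \<le> multiplicity p (card (Q <#> K'))" using vA vB vC vD by linarith
  then have "p ^ a dvd card (Q <#> K')" using multiplicity_dvd' by blast
  then have ge: "card P \<le> card (Q <#> K')" using cQK cP by (simp add: dvd_imp_le)
  have "normal_core (G\<lparr>carrier := P\<rparr>) K <#> K' = P"
  proof (rule card_seteq[OF finP up])
    show "card P \<le> card (normal_core (G\<lparr>carrier := P\<rparr>) K <#> K')"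
      using ge card_mono[OF finite_subset[OF up finP] low] by linarith
  qed
  then show ?thesis unfolding set_mult_restr K_def K'_def M_def .
qed

lemma core_restr_sub:
  assumes P: "subgroup P G" and KP: "K \<subseteq> P"
  shows "normal_core (G\<lparr>carrier := P\<rparr>) K \<subseteq> K"
proof -
  have Kc: "K \<subseteq> carrier G" using KP P subgroup.subset by blast
  have "\<one> \<in> P" using P subgroup.one_closed by blast
  then have "normal_core (G\<lparr>carrier := P\<rparr>) K \<subseteq> conj_sub (G\<lparr>carrier := P\<rparr>) \<one> K"
    unfolding normal_core_def by auto
  also have "\<dots> = conj_sub G \<one> K" using conj_sub_restr[OF P \<open>\<one> \<in> P\<close>] .
  also have "\<dots> \<subseteq> K" using conj_sub_mem[OF one_closed Kc] by auto
  finally show ?thesis .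
qed

end

theorem proposition5p3:
  fixes G :: "('a, 'b) monoid_scheme" and \<H> :: "'a set set" and p :: nat and P :: "'a set"
    and R :: "'a set \<Rightarrow> 'a set"
  assumes "group G" and "finite (carrier G)"
    and "special G \<H>" and "d_G G \<H> > 1"
    and "Factorial_Ring.prime p" and "p dvd d_G G \<H>"
    and "sylow_subgroup G p P"
    and "\<forall>H\<in>\<H>. double_coset_reps G P H (R H)"
  shows "\<exists>\<H>s. \<H>s \<subseteq> H_P_set G P \<H> R \<and> special (G\<lparr>carrier := P\<rparr>) \<H>s \<and> card \<H>s \<ge> card \<H>"
proof -
  interpret group G by fact
  note fin = assms(2)
  note p = assms(5)
  have pe: "prime_elem p" using p prime_imp_prime_elem by blast
  have nu: "\<not> is_unit p" using p not_prime_unit by blast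
  define a where "a = multiplicity p (card (carrier G))"
  have P: "subgroup P G" and cP: "card P = p ^ a" using assms(7) unfolding sylow_subgroup_def a_def by auto
  have Pc: "P \<subseteq> carrier G" using P subgroup.subset by blast
  have sub: "\<forall>H\<in>\<H>. subgroup H G" and notG: "carrier G \<notin> \<H>" and c2: "card \<H> \<ge> 2"
    and pair: "\<forall>H\<in>\<H>. \<forall>H'\<in>\<H>. H \<noteq> H' \<longrightarrow>
        normal_core G H <#>\<^bsub>G\<^esub> H' = carrier G \<or> normal_core G H' <#>\<^bsub>G\<^esub> H = carrier G"
    using assms(3) unfolding special_def by auto
  have cG: "card (carrier G) \<noteq> 0" using sub_card_nz[OF fin subgroup_self] .
  have vH: "multiplicity p (card H) < a" if H: "H \<in> \<H>" for H
  proof -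
    have Hs: "subgroup H G" using sub H by blast
    have "p dvd sub_index G H"
      using assms(6) H unfolding d_G_def by (meson Gcd_dvd dvd_trans imageI)
    moreover have lag: "card (rcosets\<^bsub>G\<^esub> H) * card H = card (carrier G)" using lagrange[OF Hs] unfolding order_def .
    moreover have cH: "card H \<noteq> 0" using sub_card_nz[OF fin Hs] .
    moreover have "sub_index G H = card (rcosets\<^bsub>G\<^esub> H)" unfolding sub_index_def using lag[symmetric] cH by simp
    ultimately have pd: "p dvd card (rcosets\<^bsub>G\<^esub> H)" by simp
    have cR: "card (rcosets\<^bsub>G\<^esub> H) \<noteq> 0"
    proof
      assume "card (rcosets\<^bsub>G\<^esub> H) = 0"
      then show False using lag cG by simp
    qed
    have "multiplicity p (card (carrier G)) = multiplicity p (card (rcosets\<^bsub>G\<^esub> H)) + multiplicity p (card H)"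
      using lag prime_elem_multiplicity_mult_distrib[OF pe cR cH] by simp
    moreover have "1 \<le> multiplicity p (card (rcosets\<^bsub>G\<^esub> H))" using multiplicity_geI[OF cR nu, of 1] pd by simp
    ultimately show ?thesis unfolding a_def by simp
  qed
  have "\<forall>H\<in>\<H>. \<exists>r\<in>R H. multiplicity p (card H) \<le> multiplicity p (card (P \<inter> conj_sub G r H))"
    using exists_good_rep[OF fin p P cP a_def] sub assms(8) by blast
  then have "\<forall>H\<in>\<H>. \<exists>r. r \<in> R H \<and> multiplicity p (card H) \<le> multiplicity p (card (P \<inter> conj_sub G r H))"
    by blast
  from bchoice[OF this] obtain f where f: "\<forall>H\<in>\<H>. f H \<in> R H \<and> multiplicity p (card H) \<le> multiplicity p (card (P \<inter> conj_sub G (f H) H))"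
    by blast
  have fc: "f H \<in> carrier G" if "H \<in> \<H>" for H
    using f that assms(8) unfolding double_coset_reps_def by blast
  define F where "F H = P \<inter> conj_sub G (f H) H" for H
  have Fs: "subgroup (F H) G" if "H \<in> \<H>" for H
  proof -
    have "subgroup H G" using sub that by blast
    then show ?thesis unfolding F_def using subgroups_Inter_pair[OF P conj_sub_subgroup[OF fc[OF that]]] by blast
  qed
  have FP: "F H \<subseteq> P" for H unfolding F_def by blast
  have Fne: "F H \<noteq> P" if H: "H \<in> \<H>" for H
  proof
    assume eq: "F H = P"
    have Hs: "subgroup H G" using sub H by blast
    have "F H \<subseteq> conj_sub G (f H) H" unfolding F_def by blast
    then have "card (F H) dvd card (conj_sub G (f H) H)"
      using sub_dvd[OF Fs[OF H] conj_sub_subgroup[OF fc[OF H] Hs]] by blast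
    moreover have "card (conj_sub G (f H) H) = card H" using conj_sub_card[OF fc[OF H] subgroup.subset[OF Hs]] .
    ultimately have "card (F H) dvd card H" by simp
    then have "p ^ a dvd card H" using eq cP by simp
    then have "a \<le> multiplicity p (card H)" using multiplicity_geI[OF sub_card_nz[OF fin Hs] nu] by blast
    then show False using vH[OF H] by simp
  qed
  have keyF: "set_mult (G\<lparr>carrier := P\<rparr>) (normal_core (G\<lparr>carrier := P\<rparr>) (F H)) (F H') = P"
    if H: "H \<in> \<H>" and H': "H' \<in> \<H>" and NH: "normal_core G H <#>\<^bsub>G\<^esub> H' = carrier G" for H H'
  proof -
    have Hs: "subgroup H G" "subgroup H' G" using sub H H' by auto
    have g: "multiplicity p (card H') \<le> multiplicity p (card (P \<inter> conj_sub G (f H') H'))" using f H' by blast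
    show ?thesis unfolding F_def using key[OF fin p P cP a_def Hs fc[OF H] fc[OF H'] NH g] .
  qed
  have noself: "set_mult (G\<lparr>carrier := P\<rparr>) (normal_core (G\<lparr>carrier := P\<rparr>) (F H)) (F H) \<noteq> P"
    if H: "H \<in> \<H>" for H
  proof -
    have "set_mult (G\<lparr>carrier := P\<rparr>) (normal_core (G\<lparr>carrier := P\<rparr>) (F H)) (F H) \<subseteq> F H"
    proof
      fix x assume "x \<in> set_mult (G\<lparr>carrier := P\<rparr>) (normal_core (G\<lparr>carrier := P\<rparr>) (F H)) (F H)"
      then obtain y z where yz: "y \<in> normal_core (G\<lparr>carrier := P\<rparr>) (F H)" "z \<in> F H" "x = y \<otimes>\<^bsub>G\<^esub> z"
        unfolding set_mult_def by auto
      have "y \<in> F H" using yz(1) core_restr_sub[OF P FP] by blast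
      then show "x \<in> F H" using yz subgroup.m_closed[OF Fs[OF H]] by simp
    qed
    then show ?thesis using Fne[OF H] FP by blast
  qed
  have pairF: "set_mult (G\<lparr>carrier := P\<rparr>) (normal_core (G\<lparr>carrier := P\<rparr>) (F H)) (F H') = P \<or>
      set_mult (G\<lparr>carrier := P\<rparr>) (normal_core (G\<lparr>carrier := P\<rparr>) (F H')) (F H) = P"
    if H: "H \<in> \<H>" and H': "H' \<in> \<H>" and ne: "H \<noteq> H'" for H H'
  proof -
    have "normal_core G H <#>\<^bsub>G\<^esub> H' = carrier G \<or> normal_core G H' <#>\<^bsub>G\<^esub> H = carrier G"
      using pair H H' ne by blast
    then show ?thesis
    proof
      assume "normal_core G H <#>\<^bsub>G\<^esub> H' = carrier G"
      then show ?thesis using keyF[OF H H'] by simp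
    next
      assume "normal_core G H' <#>\<^bsub>G\<^esub> H = carrier G"
      then show ?thesis using keyF[OF H' H] by simp
    qed
  qed
  have inj: "inj_on F \<H>"
  proof (rule inj_onI, rule ccontr)
    fix H H' assume H: "H \<in> \<H>" and H': "H' \<in> \<H>" and eq: "F H = F H'" and ne: "H \<noteq> H'"
    show False using pairF[OF H H' ne] noself[OF H] noself[OF H'] eq by auto
  qed
  have cardF: "card (F ` \<H>) = card \<H>" using card_image[OF inj] .
  show ?thesis
  proof (intro exI conjI)
    show "F ` \<H> \<subseteq> H_P_set G P \<H> R"
      unfolding H_P_set_def F_def using f by blast
    show "card \<H> \<le> card (F ` \<H>)" using cardF by simp
    show "special (G\<lparr>carrier := P\<rparr>) (F ` \<H>)"
      unfolding special_def
    proof (intro conjI ballI impI)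
      fix K assume "K \<in> F ` \<H>"
      then obtain H where H: "H \<in> \<H>" "K = F H" by blast
      show "subgroup K (G\<lparr>carrier := P\<rparr>)" using subgroup_incl[OF Fs[OF H(1)] P FP] H by simp
    next
      show "carrier (G\<lparr>carrier := P\<rparr>) \<notin> F ` \<H>" using Fne by auto
    next
      show "2 \<le> card (F ` \<H>)" using cardF c2 by simp
    next
      fix K K' assume K: "K \<in> F ` \<H>" and K': "K' \<in> F ` \<H>" and ne: "K \<noteq> K'"
      obtain H where H: "H \<in> \<H>" "K = F H" using K by blast
      obtain H' where H': "H' \<in> \<H>" "K' = F H'" using K' by blast
      have "H \<noteq> H'" using ne H H' by blast
      then show "normal_core (G\<lparr>carrier := P\<rparr>) K <#>\<^bsub>G\<lparr>carrier := P\<rparr>\<^esub> K' = carrier (G\<lparr>carrier := P\<rparr>) \<or>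
          normal_core (G\<lparr>carrier := P\<rparr>) K' <#>\<^bsub>G\<lparr>carrier := P\<rparr>\<^esub> K = carrier (G\<lparr>carrier := P\<rparr>)"
        using pairF[OF H(1) H'(1)] H H' by simp
    qed
  qed
qed

end
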